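(* Under the standing assumptions below, for every $h>0$ and every $r\in(0,1)$, $$c_*(h)<\frac{1}{hr}\ln\Big(\frac{p}{1-r^2}\int_{\mathbb R}K(s)e^{-rs}\,ds\Big).$$
   Context: Let $K:\mathbb R\to[0,\infty)$ be measurable with $K(s)=K(-s)$ for all $s\in\mathbb R$, $\int_{\mathbb R}K(s)\,ds=1$, and $\int_{\mathbb R}K(s)e^{\lambda s}ds<\infty$ for every $\lambda\in\mathbb R$. Fix $p>1$. For $h\ge0$, $z\in\mathbb R$, $\varepsilon>0$ set $$\psi_h(z,\varepsilon)=\varepsilon z^2-z-1+p\,e^{-zh}\int_{\mathbb R}K(s)e^{-\sqrt{\varepsilon}\,zs}\,ds .$$ Standing fact (known, assumed): for every $h\ge0$ there is exactly one pair $(z_0(h),\varepsilon_0(h))$ with $z_0(h)>0$, $\varepsilon_0(h)>0$ satisfying $\psi_h(z_0,\varepsilon_0)=0$ and $\partial_z\psi_h(z_0,\varepsilon_0)=0$; moreover $\varepsilon_0(h)$ is the largest $\varepsilon>0$ for which $\psi_h(\cdot,\varepsilon)$ has a positive zero, and $\psi_h(z,\varepsilon)>0$ for all $z>0$ whenever $\varepsilon>\varepsilon_0(h)$. Define $c_*(h)=1/\sqrt{\varepsilon_0(h)}$. *)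

theory Defs
  imports "HOL-Analysis.Analysis"
begin

definition psi :: "(real \<Rightarrow> real) \<Rightarrow> real \<Rightarrow> real \<Rightarrow> real \<Rightarrow> real \<Rightarrow> real" where
  "psi K p h z \<epsilon> = \<epsilon> * z\<^sup>2 - z - 1
      + p * exp (- z * h) * (LINT s|lborel. K s * exp (- sqrt \<epsilon> * z * s))"

definition double_root :: "(real \<Rightarrow> real) \<Rightarrow> real \<Rightarrow> real \<Rightarrow> real \<times> real \<Rightarrow> bool" where
  "double_root K p h ze \<longleftrightarrow> (case ze of (z, \<epsilon>) \<Rightarrow>
      z > 0 \<and> \<epsilon> > 0 \<and> psi K p h z \<epsilon> = 0 \<and>
      ((\<lambda>w. psi K p h w \<epsilon>) has_real_derivative 0) (at z))"

definition eps0 :: "(real \<Rightarrow> real) \<Rightarrow> real \<Rightarrow> real \<Rightarrow> real" where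
  "eps0 K p h = snd (THE ze. double_root K p h ze)"

definition c_star :: "(real \<Rightarrow> real) \<Rightarrow> real \<Rightarrow> real \<Rightarrow> real" where
  "c_star K p h = 1 / sqrt (eps0 K p h)"

definition standing_fact :: "(real \<Rightarrow> real) \<Rightarrow> real \<Rightarrow> bool" where
  "standing_fact K p \<longleftrightarrow> (\<forall>h\<ge>0.
      (\<exists>!ze. double_root K p h ze) \<and>
      (eps0 K p h = (GREATEST \<epsilon>. \<epsilon> > 0 \<and> (\<exists>z>0. psi K p h z \<epsilon> = 0))) \<and>
      (\<exists>z>0. psi K p h z (eps0 K p h) = 0) \<and>
      (\<forall>\<epsilon>>eps0 K p h. \<forall>z>0. psi K p h z \<epsilon> > 0))"

end

theory Submission
  imports Defs
begin

theorem mainTheorem5: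
  fixes K :: "real \<Rightarrow> real" and p h r :: real
  assumes K_meas: "K \<in> borel_measurable borel"
    and K_nonneg: "\<And>s. K s \<ge> 0"
    and K_sym: "\<And>s. K s = K (- s)"
    and K_int: "(LINT s|lborel. K s) = 1"
    and K_exp: "\<And>a. integrable lborel (\<lambda>s. K s * exp (a * s))"
    and p_gt: "p > 1"
    and standing: "standing_fact K p"
    and h_pos: "h > 0"
    and r_pos: "0 < r" and r_lt: "r < 1"
  shows "c_star K p h < 1 / (h * r) * ln (p / (1 - r\<^sup>2) * (LINT s|lborel. K s * exp (- r * s)))"
proof -
  define I where "I = (LINT s|lborel. K s * exp (- r * s))"
  define e0 where "e0 = eps0 K p h"
  define c where "c = c_star K p h"
  have st: "(\<exists>!ze. double_root K p h ze)" "\<forall>\<epsilon>>e0. \<forall>z>0. psi K p h z \<epsilon> > 0"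
    using standing h_pos unfolding standing_fact_def e0_def by auto
  have "double_root K p h (THE ze. double_root K p h ze)"
    using st(1) by (rule theI')
  hence e0pos: "e0 > 0" unfolding e0_def eps0_def double_root_def
    by (auto split: prod.splits)
  have cpos: "c > 0" and ce: "c = 1 / sqrt e0" using e0pos unfolding c_def c_star_def e0_def by auto
  define A where "A = p * I * exp (- r * h * c)"
  have rh: "r * h > 0" using r_pos h_pos by simp
  define \<delta> where "\<delta> = min (c/2) (ln (1 + r*c/2) / (r*h))"
  have lnpos: "ln (1 + r*c/2) > 0" using r_pos cpos by (intro ln_gt_zero) simp
  have dpos: "\<delta> > 0" using cpos lnpos rh unfolding \<delta>_def by auto
  have dle: "\<delta> \<le> c/2" unfolding \<delta>_def by (rule min.cobounded1)
  have "\<delta> \<le> ln (1 + r*c/2) / (r*h)" unfolding \<delta>_def by (rule min.cobounded2)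
  hence "r*h*\<delta> \<le> ln (1 + r*c/2)" using rh by (simp add: field_simps)
  hence expd: "exp (r*h*\<delta>) \<le> 1 + r*c/2"
    by (metis exp_le_cancel_iff exp_ln add_pos_pos r_pos cpos zero_less_one divide_pos_pos mult_pos_pos zero_less_numeral)
  define d where "d = c - \<delta>"
  have dp: "d > 0" "d < c" using dle dpos cpos unfolding d_def by auto
  define \<epsilon> where "\<epsilon> = 1 / d\<^sup>2"
  have sqe: "sqrt \<epsilon> = 1 / d" using dp unfolding \<epsilon>_def by (simp add: real_sqrt_divide)
  have e0c: "e0 = 1 / c\<^sup>2" using ce e0pos by (simp add: power_divide)
  have "\<epsilon> > e0" unfolding \<epsilon>_def e0c using dp
    by (simp add: frac_less2 power_strict_mono)
  moreover have "r * d > 0" using dp r_pos by simp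
  ultimately have "psi K p h (r*d) \<epsilon> > 0" using st(2) by blast
  moreover have "psi K p h (r*d) \<epsilon> = r^2 - r*d - 1 + p * exp (- (r*d) * h) * I"
  proof -
    have "sqrt \<epsilon> * (r*d) = r" using sqe dp by simp
    hence "(LINT s|lborel. K s * exp (- sqrt \<epsilon> * (r*d) * s)) = I" unfolding I_def
      by (metis (no_types) mult_minus_left)
    moreover have "\<epsilon> * (r*d)^2 = r^2" unfolding \<epsilon>_def using dp by (simp add: power2_eq_square)
    ultimately show ?thesis unfolding psi_def by simp
  qed
  ultimately have ineq: "p * I * exp (- r*h*d) > 1 - r^2 + r*d"
    by (simp add: algebra_simps)
  have "exp (- r*h*d) = exp (- r*h*c) * exp (r*h*\<delta>)"
    unfolding d_def by (simp add: algebra_simps flip: exp_add)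
  hence ineq2: "A * exp (r*h*\<delta>) > 1 - r^2 + r*d" using ineq unfolding A_def by (simp add: mult.assoc)
  have Agt: "A > 1 - r^2"
  proof (rule ccontr)
    assume "\<not> ?thesis"
    hence A1: "A \<le> 1 - r^2" by simp
    have "A * (exp (r*h*\<delta>) - 1) \<le> (1 - r^2) * (exp (r*h*\<delta>) - 1)"
      using A1 dpos rh by (intro mult_right_mono) auto
    also have "\<dots> \<le> exp (r*h*\<delta>) - 1" using r_pos dpos rh
      by (simp add: mult_le_cancel_right1 power2_eq_square)
    also have "\<dots> \<le> r*c/2" using expd by simp
    also have "\<dots> \<le> r*d" using dle r_pos unfolding d_def by simp
    finally show False using ineq2 A1 by (simp add: algebra_simps)
  qed
  have r2: "1 - r^2 > 0" using r_pos r_lt by (simp add: power2_eq_square) (metis mult_strict_mono' less_eq_real_def r_pos mult_1_right)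
  have X: "p / (1 - r\<^sup>2) * I > exp (r*h*c)"
  proof -
    have "exp (r*h*c) * (1 - r^2) < exp (r*h*c) * A" using Agt by simp
    also have "exp (r*h*c) * A = p * I" unfolding A_def by (simp add: mult.assoc flip: exp_add)
    finally show ?thesis using r2 by (simp add: field_simps)
  qed
  hence "ln (p / (1 - r\<^sup>2) * I) > r*h*c"
    by (metis exp_gt_zero ln_exp ln_less_cancel_iff order.strict_trans)
  thus ?thesis unfolding c_def[symmetric] I_def[symmetric] using rh
    by (simp add: field_simps mult.commute)
qed

end
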